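(* Let $\mapsto_S$ be the indexed small-step head-reduction relation on legal top-level terms and $\mapsto_T$ the named small-step head-reduction relation on pure $\lambda$-terms, with reflexive–transitive closures $\mapsto_S^*$, $\mapsto_T^*$. Then: (1) for legal top-level terms $t, t'$, $t \mapsto_S^* t'$ implies $t^* \mapsto_T^* t'^*$; (2) for pure $\lambda$-terms $v, v'$, $v \mapsto_T^* v'$ implies $v^\# \mapsto_S^* v'^\#$; (3) for every legal top-level term $t$, $t \mapsto_S^* t^{*\#}$, and for every pure $\lambda$-term $v$, $v^{\#*} = v$.
   Context: Pure $\lambda$-terms: $v ::= x \mid v\,v \mid \lambda x.v$, with capture-avoiding substitution $v[v'/x]$. Indexed semantics $\mapsto_S$. Indices $i ::= \mathrm{zero} \mid \mathrm{succ}(i)$. Terms $v ::= x \mid v\,v \mid \lambda x.v \mid i$. Top-level terms $t ::= v \mid \lambda.t$. Evaluation contexts $E ::= \Box \mid E\,v$. Top-level contexts $S ::= \Box \mid \lambda.S$. $\mathrm{Count}(\Box)=\mathrm{zero}$, $\mathrm{Count}(\lambda.S)=\mathrm{succ}(\mathrm{Count}(S))$. Rules: ($\beta$) $S[E[(\lambda x.v)\,v']] \mapsto_S S[E[v[v'/x]]]$; (non-$\beta$) $S[\lambda x.v] \mapsto_S S[\lambda.v[\mathrm{Count}(S)/x]]$. Readback rule: $S[\lambda.v] \hookrightarrow S[\lambda x.v[x/\mathrm{Count}(S)]]$ with $x$ fresh, where $v[x/i]$ replaces every occurrence of index $i$ in $v$ by $x$. A top-level term $S[v]$ is legal iff every index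 $i$ occurring in $v$ satisfies $i<\mathrm{Count}(S)$. Named semantics $\mapsto_T$. Evaluation contexts $E ::= \Box \mid E\,v$; top-level contexts $S ::= E \mid \lambda x.S$; rule $S[(\lambda x.v)\,v'] \mapsto_T S[v[v'/x]]$. Translations: for a legal top-level term $t$, $t^*$ is the (pure $\lambda$-term) normal form of $t$ with respect to the readback rule $\hookrightarrow$; for a pure $\lambda$-term $v$, $v^\#$ is the normal form of $v$ with respect to the non-$\beta$ rule of $\mapsto_S$. *)

theory Defs
  imports Main
begin

text \<open>Terms are represented up to alpha-equivalence using de Bruijn indices for
  the named (lambda-bound or free) variables x.  The constructor Idx i is the
  paper's index i (zero / succ(i) rendered as nat), a constant that is never
  bound or shifted.\<close>

datatype trm = Var nat | App trm trm | Lam trm | Idx nat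

datatype top = Tm trm | TLam top

fun idxs :: "trm \<Rightarrow> nat set" where
  "idxs (Var n) = {}"
| "idxs (App s u) = idxs s \<union> idxs u"
| "idxs (Lam s) = idxs s"
| "idxs (Idx i) = {i}"

definition pure :: "trm \<Rightarrow> bool" where
  "pure v \<longleftrightarrow> idxs v = {}"

fun legal_at :: "nat \<Rightarrow> top \<Rightarrow> bool" where
  "legal_at k (Tm v) \<longleftrightarrow> (\<forall>i\<in>idxs v. i < k)"
| "legal_at k (TLam t) \<longleftrightarrow> legal_at (Suc k) t"

definition legal :: "top \<Rightarrow> bool" where
  "legal t \<longleftrightarrow> legal_at 0 t"

fun lift :: "nat \<Rightarrow> trm \<Rightarrow> trm" where
  "lift k (Var n) = (if n < k then Var n else Var (Suc n))"
| "lift k (App s u) = App (lift k s) (lift k u)"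
| "lift k (Lam s) = Lam (lift (Suc k) s)"
| "lift k (Idx i) = Idx i"

fun subst :: "trm \<Rightarrow> nat \<Rightarrow> trm \<Rightarrow> trm" where
  "subst (Var n) k s = (if n < k then Var n else if n = k then s else Var (n - 1))"
| "subst (App a b) k s = App (subst a k s) (subst b k s)"
| "subst (Lam a) k s = Lam (subst a (Suc k) (lift 0 s))"
| "subst (Idx i) k s = Idx i"

text \<open>v[x/i] followed by binding x: replace index i by the variable bound by a
  new lambda placed on top (at depth d), shifting free variables.\<close>
fun abst :: "nat \<Rightarrow> nat \<Rightarrow> trm \<Rightarrow> trm" where
  "abst i d (Var n) = (if n < d then Var n else Var (Suc n))"
| "abst i d (App a b) = App (abst i d a) (abst i d b)"
| "abst i d (Lam a) = Lam (abst i (Suc d) a)"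
| "abst i d (Idx j) = (if j = i then Var d else Idx j)"

text \<open>Beta step in an evaluation context E ::= [] | E v.\<close>
inductive hred :: "trm \<Rightarrow> trm \<Rightarrow> bool" where
  beta: "hred (App (Lam v) v') (subst v 0 v')"
| appL: "hred s s' \<Longrightarrow> hred (App s u) (App s' u)"

text \<open>Named semantics: S ::= E | lambda x.S.\<close>
inductive stepT :: "trm \<Rightarrow> trm \<Rightarrow> bool" where
  E: "hred s s' \<Longrightarrow> stepT s s'"
| L: "stepT s s' \<Longrightarrow> stepT (Lam s) (Lam s')"

text \<open>Indexed semantics; the nat parameter is Count(S) of the surrounding
  top-level context.\<close>
inductive stepS_at :: "nat \<Rightarrow> top \<Rightarrow> top \<Rightarrow> bool" where
  beta: "hred v v' \<Longrightarrow> stepS_at k (Tm v) (Tm v')"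
| nonbeta: "stepS_at k (Tm (Lam v)) (TLam (Tm (subst v 0 (Idx k))))"
| ctx: "stepS_at (Suc k) t t' \<Longrightarrow> stepS_at k (TLam t) (TLam t')"

definition stepS :: "top \<Rightarrow> top \<Rightarrow> bool" where
  "stepS = stepS_at 0"

inductive nonbeta_at :: "nat \<Rightarrow> top \<Rightarrow> top \<Rightarrow> bool" where
  nonbeta: "nonbeta_at k (Tm (Lam v)) (TLam (Tm (subst v 0 (Idx k))))"
| ctx: "nonbeta_at (Suc k) t t' \<Longrightarrow> nonbeta_at k (TLam t) (TLam t')"

text \<open>Readback rule: S[lambda.v] --> S[lambda x. v[x/Count(S)]].\<close>
inductive readback_at :: "nat \<Rightarrow> top \<Rightarrow> top \<Rightarrow> bool" where
  rb: "readback_at k (TLam (Tm v)) (Tm (Lam (abst k 0 v)))"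
| ctx: "readback_at (Suc k) t t' \<Longrightarrow> readback_at k (TLam t) (TLam t')"

definition star :: "top \<Rightarrow> trm" where
  "star t = (THE v. (readback_at 0)\<^sup>*\<^sup>* t (Tm v) \<and> (\<nexists>u. readback_at 0 (Tm v) u))"

definition sharp :: "trm \<Rightarrow> top" where
  "sharp v = (THE t. (nonbeta_at 0)\<^sup>*\<^sup>* (Tm v) t \<and> (\<nexists>u. nonbeta_at 0 t u))"

end

theory Submission
  imports Defs
begin

fun rb :: "nat \<Rightarrow> top \<Rightarrow> trm" where
  "rb k (Tm v) = v"
| "rb k (TLam t) = Lam (abst k 0 (rb (Suc k) t))"

lemma size_subst_idx[simp]: "size (subst w j (Idx k)) = size w"
  by (induction w arbitrary: j) auto

function sh :: "nat \<Rightarrow> trm \<Rightarrow> top" where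
  "sh k (Lam w) = TLam (sh (Suc k) (subst w 0 (Idx k)))"
| "sh k (Var n) = Tm (Var n)"
| "sh k (App a b) = Tm (App a b)"
| "sh k (Idx i) = Tm (Idx i)"
  by pat_completeness auto
termination by (relation "measure (\<lambda>(k,v). size v)") auto

fun shT :: "nat \<Rightarrow> top \<Rightarrow> top" where
  "shT k (Tm v) = sh k v"
| "shT k (TLam t) = TLam (shT (Suc k) t)"

inductive_cases hredE_Lam[elim!]: "hred (Lam s) x"
inductive_cases hredE_Var[elim!]: "hred (Var s) x"
inductive_cases hredE_Idx[elim!]: "hred (Idx s) x"
inductive_cases rbE_Tm[elim!]: "readback_at k (Tm v) u"
inductive_cases nbE_Tm[elim!]: "nonbeta_at k (Tm v) u"
inductive_cases nbE_TLam[elim!]: "nonbeta_at k (TLam v) u"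
inductive_cases stepTE_Lam: "stepT (Lam s) x"

lemma abst_lift: "m \<le> d \<Longrightarrow> abst i (Suc d) (lift m s) = lift m (abst i d s)"
  by (induction s arbitrary: m d) auto

lemma abst_subst: "k \<le> d \<Longrightarrow> abst i d (subst v k s) = subst (abst i (Suc d) v) k (abst i d s)"
  by (induction v arbitrary: k d s) (auto simp: abst_lift)

lemma hred_abst: "hred a b \<Longrightarrow> hred (abst i d a) (abst i d b)"
proof (induction arbitrary: d rule: hred.induct)
  case (beta v v')
  then show ?case using hred.beta[of "abst i (Suc d) v" "abst i d v'"] abst_subst[of 0 d i v v'] by simp
next
  case (appL s s' u) then show ?case by (simp add: hred.appL)
qed

lemma stepT_abst: "stepT a b \<Longrightarrow> stepT (abst i d a) (abst i d b)"
  by (induction arbitrary: d rule: stepT.induct) (auto intro: stepT.intros hred_abst)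

lemma stepT_rtc_abst: "stepT\<^sup>*\<^sup>* a b \<Longrightarrow> stepT\<^sup>*\<^sup>* (abst i d a) (abst i d b)"
  by (induction rule: rtranclp_induct) (auto intro: rtranclp.rtrancl_into_rtrancl stepT_abst)

lemma stepT_rtc_Lam: "stepT\<^sup>*\<^sup>* a b \<Longrightarrow> stepT\<^sup>*\<^sup>* (Lam a) (Lam b)"
  by (induction rule: rtranclp_induct) (auto intro: rtranclp.rtrancl_into_rtrancl stepT.L)

lemma abst_subst_Idx: "i \<notin> idxs v \<Longrightarrow> abst i d (subst v d (Idx i)) = v"
  by (induction v arbitrary: d) auto

lemma subst_abst: "subst (abst i d v) d (Idx i) = v"
  by (induction v arbitrary: d) auto

lemma idxs_lift[simp]: "idxs (lift m s) = idxs s"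
  by (induction s arbitrary: m) auto

lemma idxs_subst: "idxs (subst v k s) \<subseteq> idxs v \<union> idxs s"
proof (induction v arbitrary: k s)
  case (Lam v) then show ?case using Lam[of "Suc k" "lift 0 s"] by auto
next
  case (App a b) then show ?case using App(1)[of k s] App(2)[of k s] by fastforce
qed auto

lemma hred_idxs: "hred a b \<Longrightarrow> idxs b \<subseteq> idxs a"
  by (induction rule: hred.induct) (use idxs_subst in auto)

lemma legal_step: "stepS_at k t t' \<Longrightarrow> legal_at k t \<Longrightarrow> legal_at k t'"
proof (induction rule: stepS_at.induct)
  case (beta v v' k) then show ?case using hred_idxs by fastforce
next
  case (nonbeta k v) then show ?case using idxs_subst[of v 0 "Idx k"] by fastforce
next
  case (ctx k t t') then show ?case by simp
qed

lemma legal_rtc: "(stepS_at k)\<^sup>*\<^sup>* t t' \<Longrightarrow> legal_at k t \<Longrightarrow> legal_at k t'"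
  by (induction rule: rtranclp_induct) (auto intro: legal_step)

lemma step1: "stepS_at k t t' \<Longrightarrow> legal_at k t \<Longrightarrow> stepT\<^sup>*\<^sup>* (rb k t) (rb k t')"
proof (induction rule: stepS_at.induct)
  case (beta v v' k) then show ?case by (auto intro: stepT.E)
next
  case (nonbeta k v) then show ?case by (auto simp: abst_subst_Idx)
next
  case (ctx k t t') then show ?case by (auto intro: stepT_rtc_Lam stepT_rtc_abst)
qed

lemma part1: "stepS\<^sup>*\<^sup>* t t' \<Longrightarrow> legal t \<Longrightarrow> stepT\<^sup>*\<^sup>* (rb 0 t) (rb 0 t')"
  unfolding stepS_def legal_def
proof (induction rule: rtranclp_induct)
  case base then show ?case by simp
next
  case (step y z)
  have "legal_at 0 y" using legal_rtc step by blast
  then show ?case using step step1 by (meson rtranclp_trans)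
qed

lemma rb_inv: "readback_at k t u \<Longrightarrow> rb k u = rb k t"
  by (induction rule: readback_at.induct) auto

lemma rb_inv_rtc: "(readback_at k)\<^sup>*\<^sup>* t u \<Longrightarrow> rb k u = rb k t"
  by (induction rule: rtranclp_induct) (auto dest: rb_inv)

lemma rb_ctx_rtc: "(readback_at (Suc k))\<^sup>*\<^sup>* t u \<Longrightarrow> (readback_at k)\<^sup>*\<^sup>* (TLam t) (TLam u)"
  by (induction rule: rtranclp_induct) (auto intro: rtranclp.rtrancl_into_rtrancl readback_at.ctx)

lemma rb_reach: "(readback_at k)\<^sup>*\<^sup>* t (Tm (rb k t))"
proof (induction t arbitrary: k)
  case (Tm v) then show ?case by simp
next
  case (TLam t)
  have "(readback_at k)\<^sup>*\<^sup>* (TLam t) (TLam (Tm (rb (Suc k) t)))" using TLam rb_ctx_rtc by blast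
  then show ?case by (auto intro: rtranclp.rtrancl_into_rtrancl readback_at.rb)
qed

lemma star_rb: "star t = rb 0 t"
  unfolding star_def
proof (rule the_equality)
  show "(readback_at 0)\<^sup>*\<^sup>* t (Tm (rb 0 t)) \<and> (\<nexists>u. readback_at 0 (Tm (rb 0 t)) u)"
    using rb_reach by blast
next
  fix v assume "(readback_at 0)\<^sup>*\<^sup>* t (Tm v) \<and> (\<nexists>u. readback_at 0 (Tm v) u)"
  then show "v = rb 0 t" using rb_inv_rtc by fastforce
qed

lemma nb_inv: "nonbeta_at k t u \<Longrightarrow> shT k u = shT k t"
  by (induction rule: nonbeta_at.induct) auto

lemma nb_inv_rtc: "(nonbeta_at k)\<^sup>*\<^sup>* t u \<Longrightarrow> shT k u = shT k t"
  by (induction rule: rtranclp_induct) (auto dest: nb_inv)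

lemma nb_ctx_rtc: "(nonbeta_at (Suc k))\<^sup>*\<^sup>* t u \<Longrightarrow> (nonbeta_at k)\<^sup>*\<^sup>* (TLam t) (TLam u)"
  by (induction rule: rtranclp_induct) (auto intro: rtranclp.rtrancl_into_rtrancl nonbeta_at.ctx)

lemma sh_reach: "(nonbeta_at k)\<^sup>*\<^sup>* (Tm v) (sh k v)"
proof (induction k v rule: sh.induct)
  case (1 k w)
  have "nonbeta_at k (Tm (Lam w)) (TLam (Tm (subst w 0 (Idx k))))" by (rule nonbeta_at.nonbeta)
  then show ?case using nb_ctx_rtc[OF "1"] by (simp add: converse_rtranclp_into_rtranclp)
qed auto

lemma shT_reach: "(nonbeta_at k)\<^sup>*\<^sup>* t (shT k t)"
  by (induction t arbitrary: k) (auto intro: sh_reach nb_ctx_rtc)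

lemma sh_nf: "\<not> nonbeta_at k (sh k v) u"
  by (induction k v arbitrary: u rule: sh.induct) auto

lemma nf_shT: "\<nexists>u. nonbeta_at k t u \<Longrightarrow> shT k t = t"
proof (induction t arbitrary: k)
  case (Tm v)
  then show ?case by (cases v) (auto intro: nonbeta_at.nonbeta)
next
  case (TLam t) then show ?case by (auto intro: nonbeta_at.ctx)
qed

lemma sharp_sh: "sharp v = sh 0 v"
  unfolding sharp_def
proof (rule the_equality)
  show "(nonbeta_at 0)\<^sup>*\<^sup>* (Tm v) (sh 0 v) \<and> (\<nexists>u. nonbeta_at 0 (sh 0 v) u)"
    using sh_reach sh_nf by blast
next
  fix t assume a: "(nonbeta_at 0)\<^sup>*\<^sup>* (Tm v) t \<and> (\<nexists>u. nonbeta_at 0 t u)"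
  then have "shT 0 t = sh 0 v" using nb_inv_rtc by fastforce
  then show "t = sh 0 v" using nf_shT a by metis
qed

lemma nb_step: "nonbeta_at k t u \<Longrightarrow> stepS_at k t u"
  by (induction rule: nonbeta_at.induct) (auto intro: stepS_at.intros)

lemma nb_step_rtc: "(nonbeta_at k)\<^sup>*\<^sup>* t u \<Longrightarrow> (stepS_at k)\<^sup>*\<^sup>* t u"
  by (induction rule: rtranclp_induct) (auto intro: rtranclp.rtrancl_into_rtrancl nb_step)

lemma rb_nb: "(nonbeta_at k)\<^sup>*\<^sup>* (Tm (rb k t)) t"
proof (induction t arbitrary: k)
  case (Tm v) then show ?case by simp
next
  case (TLam t)
  have "nonbeta_at k (Tm (rb k (TLam t))) (TLam (Tm (rb (Suc k) t)))"
    using nonbeta_at.nonbeta[of k "abst k 0 (rb (Suc k) t)"] by (simp add: subst_abst)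
  then show ?case using nb_ctx_rtc[OF TLam] by (simp add: converse_rtranclp_into_rtranclp)
qed

lemma part3: "stepS\<^sup>*\<^sup>* t (sharp (star t))"
proof -
  have "sh 0 (rb 0 t) = shT 0 t" using nb_inv_rtc[OF rb_nb[of 0 t]] by simp
  then show ?thesis unfolding sharp_sh star_rb stepS_def using nb_step_rtc shT_reach by metis
qed

lemma rb_sh: "\<forall>i\<in>idxs v. i < k \<Longrightarrow> rb k (sh k v) = v"
proof (induction k v rule: sh.induct)
  case (1 k w)
  have "\<forall>i\<in>idxs (subst w 0 (Idx k)). i < Suc k"
    using idxs_subst[of w 0 "Idx k"] 1(2) by fastforce
  then have "rb (Suc k) (sh (Suc k) (subst w 0 (Idx k))) = subst w 0 (Idx k)" using 1 by blast
  moreover have "k \<notin> idxs w" using 1(2) by auto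
  ultimately show ?case by (simp add: abst_subst_Idx)
qed auto

lemma subst_lift_c: "m \<le> j \<Longrightarrow> subst (lift m u) (Suc j) (Idx c) = lift m (subst u j (Idx c))"
  by (induction u arbitrary: m j) auto

lemma subst_subst_c: "i \<le> j \<Longrightarrow> subst (subst v i u) j (Idx c) = subst (subst v (Suc j) (Idx c)) i (subst u j (Idx c))"
  by (induction v arbitrary: i j u) (auto simp: subst_lift_c)

lemma hred_subst: "hred a b \<Longrightarrow> hred (subst a j (Idx c)) (subst b j (Idx c))"
proof (induction arbitrary: j rule: hred.induct)
  case (beta v v')
  then show ?case using hred.beta[of "subst v (Suc j) (Idx c)" "subst v' j (Idx c)"] subst_subst_c[of 0 j v v' c] by simp
next
  case (appL s s' u) then show ?case by (simp add: hred.appL)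
qed

lemma stepT_subst: "stepT a b \<Longrightarrow> stepT (subst a j (Idx c)) (subst b j (Idx c))"
  by (induction arbitrary: j rule: stepT.induct) (auto intro: stepT.intros hred_subst)

lemma stepS_ctx_rtc: "(stepS_at (Suc k))\<^sup>*\<^sup>* t u \<Longrightarrow> (stepS_at k)\<^sup>*\<^sup>* (TLam t) (TLam u)"
  by (induction rule: rtranclp_induct) (auto intro: rtranclp.rtrancl_into_rtrancl stepS_at.ctx)

lemma step2: "stepT v v' \<Longrightarrow> (stepS_at k)\<^sup>*\<^sup>* (sh k v) (sh k v')"
proof (induction "size v" arbitrary: v v' k rule: less_induct)
  case less
  show ?case using less(2)
  proof (cases rule: stepT.cases)
    case (E)
    then obtain a b where vab: "v = App a b" by (cases rule: hred.cases) auto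
    have "stepS_at k (Tm v) (Tm v')" using E by (rule stepS_at.beta)
    moreover have "(stepS_at k)\<^sup>*\<^sup>* (Tm v') (sh k v')" using nb_step_rtc sh_reach by blast
    ultimately show ?thesis using vab by (simp add: converse_rtranclp_into_rtranclp)
  next
    case (L s s')
    have "stepT (subst s 0 (Idx k)) (subst s' 0 (Idx k))" using L stepT_subst by blast
    moreover have "size (subst s 0 (Idx k)) < size v" using L by simp
    ultimately have "(stepS_at (Suc k))\<^sup>*\<^sup>* (sh (Suc k) (subst s 0 (Idx k))) (sh (Suc k) (subst s' 0 (Idx k)))"
      using less(1) by blast
    then show ?thesis using L by (simp add: stepS_ctx_rtc)
  qed
qed

lemma part2: "stepT\<^sup>*\<^sup>* v v' \<Longrightarrow> stepS\<^sup>*\<^sup>* (sharp v) (sharp v')"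
  unfolding sharp_sh stepS_def
  by (induction rule: rtranclp_induct) (auto intro: rtranclp_trans step2)

theorem theorem4:
  shows "(\<forall>t t'. legal t \<and> legal t' \<and> stepS\<^sup>*\<^sup>* t t' \<longrightarrow> stepT\<^sup>*\<^sup>* (star t) (star t'))
       \<and> (\<forall>v v'. pure v \<and> pure v' \<and> stepT\<^sup>*\<^sup>* v v' \<longrightarrow> stepS\<^sup>*\<^sup>* (sharp v) (sharp v'))
       \<and> (\<forall>t. legal t \<longrightarrow> stepS\<^sup>*\<^sup>* t (sharp (star t)))
       \<and> (\<forall>v. pure v \<longrightarrow> star (sharp v) = v)"
  using part1 part2 part3 rb_sh[of _ 0] by (auto simp: star_rb sharp_sh pure_def)

end
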